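(* Let $0\le\ell\le r$. The prime ideals $[I_0,\dots,I_\ell]$ of $\Omega_{H_\ell}$ with $I_0=0$ are exactly the $\ell+1$ ideals $$0\subsetneq\mathcal L(0)\subsetneq\mathcal L^2(0)\subsetneq\cdots\subsetneq\mathcal L^\ell(0),$$ where, for $0\le k\le\ell$, $\mathcal L^k(0)$ is the ideal of $\Omega_{H_\ell}$ obtained by applying $\mathcal L$ $k$ times to the zero ideal $[0,\dots,0]$ of $\Omega_{H_{\ell-k}}$.
   Context: Fix a prime $p$ and an integer $r\ge0$. For $0\le k\le r$ let $R_k$ be the commutative ring which is free as a $\mathbb{Z}$-module with basis $X_{k,0},\dots,X_{k,k}$ and multiplication $X_{k,i}X_{k,j}=p^{k-\max(i,j)}X_{k,\min(i,j)}$; thus $X_{k,k}=1$, and an integer $n$ is identified with $nX_{k,k}$. For $0\le k\le\ell\le r$ define: the additive map $\mathrm{ind}^\ell_k:R_k\to R_\ell$, $X_{k,i}\mapsto X_{\ell,i}$; the ring homomorphism $\mathrm{res}^\ell_k:R_\ell\to R_k$, $\mathrm{res}^\ell_k(X_{\ell,i})=p^{\ell-k}X_{k,i}$ if $i\le k$ and $=p^{\ell-i}$ if $i\ge k$; and the multiplicative map $\mathrm{jnd}^\ell_k:R_k\to R_\ell$, $$\mathrm{jnd}^\ell_k\Big(\sum_{i=0}^k m_iX_{k,i}\Big)=m_kX_{\ell,\ell}+\sum_{k\le i<\ell}\frac{m_k^{p^{\ell-i}}-m_k^{p^{\ell-i-1}}}{p^{\ell-i}}X_{\ell,i}+\sum_{0\le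 i<k}\frac{(\sum_{s=i}^k m_sp^{k-s})^{p^{\ell-k}}-(\sum_{s=i+1}^k m_sp^{k-s})^{p^{\ell-k}}}{p^{\ell-i}}X_{\ell,i}$$ ($m_i\in\mathbb{Z}$). For $k=\ell$ these maps are the identity. These data form the Burnside Tambara functor on $\mathbb{Z}/p^r\mathbb{Z}$; keeping indices $\le n$ gives $\Omega_{H_n}$. An ideal of $\Omega_{H_n}$ is a sequence $[I_0,\dots,I_n]$ of ideals $I_k\subseteq R_k$ such that for every $1\le k\le n$: $\mathrm{ind}^k_{k-1}(I_{k-1})\subseteq I_k$, $\mathrm{res}^k_{k-1}(I_k)\subseteq I_{k-1}$, $\mathrm{jnd}^k_{k-1}(I_{k-1})\subseteq I_k$; inclusion is componentwise. It is proper if $I_0\ne R_0$. A proper ideal is prime if for all $0\le\ell'\le k\le n$, $a\in R_k$, $b\in R_{\ell'}$: whenever $(\mathrm{jnd}^m_i\mathrm{res}^k_i(a))\cdot(\mathrm{jnd}^m_j\mathrm{res}^{\ell'}_j(b))\in I_m$ for all $0\le i\le k$, $0\le j\le\ell'$, $m=\max(i,j)$, then $a\in I_k$ or $b\in I_{\ell'}$. For an ideal $I\subseteq R_{k-1}$, $L(I)=(\mathrm{res}^k_{k-1})^{-1}(I)\subseteq R_k$; for an ideal $\mathscr I=[I_0,\dots,I_{k-1}]$ of $\Omega_{H_{k-1}}$, $\mathcal L\mathscr I=[I_0,\dots,I_{k-1},L(I_{k-1})]$. *)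

theory Defs
  imports "HOL-Computational_Algebra.Primes"
begin

text \<open>An element of R_k is represented by its coefficient function
  m :: nat => int, where m i is the coefficient of X_{k,i} (i <= k),
  and m i = 0 for i > k.\<close>

definition carR :: "nat \<Rightarrow> (nat \<Rightarrow> int) set" where
  "carR k = {m. \<forall>i>k. m i = 0}"

definition zeroR :: "nat \<Rightarrow> int" where
  "zeroR = (\<lambda>_. 0)"

text \<open>Multiplication in R_k: X_{k,i} X_{k,j} = p^(k - max i j) X_{k, min i j}.\<close>
definition mulR :: "int \<Rightarrow> nat \<Rightarrow> (nat \<Rightarrow> int) \<Rightarrow> (nat \<Rightarrow> int) \<Rightarrow> (nat \<Rightarrow> int)" where
  "mulR p k a b = (\<lambda>m. if m \<le> k then
      (\<Sum>i\<le>k. \<Sum>j\<le>k. if min i j = m then a i * b j * p ^ (k - max i j) else 0)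
    else 0)"

definition indR :: "nat \<Rightarrow> nat \<Rightarrow> (nat \<Rightarrow> int) \<Rightarrow> (nat \<Rightarrow> int)" where
  "indR l k a = (\<lambda>i. if i \<le> k then a i else 0)"

definition resR :: "int \<Rightarrow> nat \<Rightarrow> nat \<Rightarrow> (nat \<Rightarrow> int) \<Rightarrow> (nat \<Rightarrow> int)" where
  "resR p l k a = (\<lambda>i. if i < k then p ^ (l - k) * a i
     else if i = k then (\<Sum>s\<in>{k..l}. a s * p ^ (l - s))
     else 0)"

text \<open>jnd^l_k : R_k -> R_l (the quotients are exact integers; div is used).\<close>
definition jndR :: "int \<Rightarrow> nat \<Rightarrow> nat \<Rightarrow> (nat \<Rightarrow> int) \<Rightarrow> (nat \<Rightarrow> int)" where
  "jndR p l k m = (\<lambda>i.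
     if i = l then m k
     else if k \<le> i \<and> i < l then
       (m k ^ (nat p ^ (l - i)) - m k ^ (nat p ^ (l - i - 1))) div p ^ (l - i)
     else if i < k then
       ((\<Sum>s\<in>{i..k}. m s * p ^ (k - s)) ^ (nat p ^ (l - k))
        - (\<Sum>s\<in>{Suc i..k}. m s * p ^ (k - s)) ^ (nat p ^ (l - k))) div p ^ (l - i)
     else 0)"

definition is_idealR :: "int \<Rightarrow> nat \<Rightarrow> (nat \<Rightarrow> int) set \<Rightarrow> bool" where
  "is_idealR p k I \<longleftrightarrow> I \<subseteq> carR k \<and> zeroR \<in> I
     \<and> (\<forall>a\<in>I. \<forall>b\<in>I. (\<lambda>i. a i + b i) \<in> I \<and> (\<lambda>i. a i - b i) \<in> I)
     \<and> (\<forall>a\<in>I. \<forall>c\<in>carR k. mulR p k c a \<in> I)"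

definition is_ideal_seq :: "int \<Rightarrow> nat \<Rightarrow> (nat \<Rightarrow> int) set list \<Rightarrow> bool" where
  "is_ideal_seq p n I \<longleftrightarrow> length I = Suc n
     \<and> (\<forall>k\<le>n. is_idealR p k (I ! k))
     \<and> (\<forall>k. 1 \<le> k \<and> k \<le> n \<longrightarrow>
          (\<forall>a\<in>I ! (k - 1). indR k (k - 1) a \<in> I ! k)
        \<and> (\<forall>a\<in>I ! k. resR p k (k - 1) a \<in> I ! (k - 1))
        \<and> (\<forall>a\<in>I ! (k - 1). jndR p k (k - 1) a \<in> I ! k))"

definition is_prime_seq :: "int \<Rightarrow> nat \<Rightarrow> (nat \<Rightarrow> int) set list \<Rightarrow> bool" where
  "is_prime_seq p n I \<longleftrightarrow> is_ideal_seq p n I \<and> I ! 0 \<noteq> carR 0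
     \<and> (\<forall>l' k a b. l' \<le> k \<and> k \<le> n \<and> a \<in> carR k \<and> b \<in> carR l' \<and>
          (\<forall>i\<le>k. \<forall>j\<le>l'.
             mulR p (max i j) (jndR p (max i j) i (resR p k i a))
                              (jndR p (max i j) j (resR p l' j b)) \<in> I ! (max i j))
          \<longrightarrow> a \<in> I ! k \<or> b \<in> I ! l')"

definition Lop :: "int \<Rightarrow> nat \<Rightarrow> (nat \<Rightarrow> int) set \<Rightarrow> (nat \<Rightarrow> int) set" where
  "Lop p k I = {a \<in> carR k. resR p k (k - 1) a \<in> I}"

definition Lseq :: "int \<Rightarrow> (nat \<Rightarrow> int) set list \<Rightarrow> (nat \<Rightarrow> int) set list" where
  "Lseq p I = I @ [Lop p (length I) (last I)]"

definition Lpow :: "int \<Rightarrow> nat \<Rightarrow> nat \<Rightarrow> (nat \<Rightarrow> int) set list" where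
  "Lpow p k l = (Lseq p ^^ k) (replicate (Suc (l - k)) {zeroR})"

definition seq_subset :: "(nat \<Rightarrow> int) set list \<Rightarrow> (nat \<Rightarrow> int) set list \<Rightarrow> bool" where
  "seq_subset I J \<longleftrightarrow> length I = length J \<and> (\<forall>k<length I. I ! k \<subseteq> J ! k)"

definition seq_psubset :: "(nat \<Rightarrow> int) set list \<Rightarrow> (nat \<Rightarrow> int) set list \<Rightarrow> bool" where
  "seq_psubset I J \<longleftrightarrow> seq_subset I J \<and> I \<noteq> J"

end

theory Submission
  imports Defs "HOL-Number_Theory.Residues"
begin

lemma fermat_int:
  fixes p a :: int assumes "prime p" shows "p dvd a ^ nat p - a"
proof -
  have p1: "p > 1" using assms prime_gt_1_int by auto
  define P where "P = nat p"
  have pP: "p = int P" using p1 P_def by auto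
  have Pp: "prime P" using assms pP by simp
  define b where "b = nat (a mod p)"
  have ab: "[a = int b] (mod p)" using p1 b_def by (simp add: cong_def)
  have "[b ^ P = b] (mod P)"
  proof (cases "P dvd b")
    case True
    then have "[b = 0] (mod P)" by (simp add: cong_0_iff)
    moreover have "P > 0" using Pp prime_gt_0_nat by blast
    ultimately show ?thesis
      by (metis cong_pow cong_sym cong_trans power_0_left neq0_conv)
  next
    case False
    have "[b ^ (P - 1) = 1] (mod P)" using fermat_theorem[OF Pp False] .
    then have "[b ^ (P - 1) * b = 1 * b] (mod P)" by (rule cong_scalar_right)
    moreover have "b ^ (P - 1) * b = b ^ P" using Pp prime_gt_0_nat
      by (metis Suc_diff_1 power_Suc2)
    ultimately show ?thesis by simp
  qed
  then have "[int b ^ P = int b] (mod int P)"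
    by (metis cong_int_iff of_nat_power)
  then have "[a ^ P = a] (mod p)" using ab pP
    by (metis cong_pow cong_sym cong_trans)
  then show ?thesis using P_def by (simp add: cong_iff_dvd_diff)
qed

lemma pow_p_cong:
  fixes p x y :: int assumes "prime p" "p ^ n dvd x - y" "n \<ge> 1"
  shows "p ^ Suc n dvd x ^ nat p - y ^ nat p"
proof -
  have p1: "p > 1" using assms prime_gt_1_int by auto
  define P where "P = nat p"
  have pP: "p = int P" using p1 P_def by auto
  have "p dvd p ^ n" using assms(3) by (simp add: dvd_power)
  then have pxy: "p dvd x - y" using assms(2) dvd_trans by blast
  then have xy: "[x = y] (mod p)" by (simp add: cong_iff_dvd_diff)
  have "[(\<Sum>i<P. y^(P - Suc i) * x^i) = (\<Sum>i<P. y^(P - Suc i) * y^i)] (mod p)"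
    by (rule cong_sum, rule cong_scalar_left, rule cong_pow, rule xy)
  moreover have "(\<Sum>i<P. y^(P - Suc i) * y^i) = (\<Sum>i<P. y^(P - 1))"
  proof (rule sum.cong)
    fix i assume "i \<in> {..<P}"
    then have "P - Suc i + i = P - 1" by auto
    then show "y^(P - Suc i) * y^i = y^(P - 1)" by (metis power_add)
  qed simp
  moreover have "(\<Sum>i<P. y^(P - 1)) = p * y^(P-1)" using pP by simp
  ultimately have "[(\<Sum>i<P. y^(P - Suc i) * x^i) = 0] (mod p)"
    by (metis cong_mult_self_left cong_trans)
  then have "p dvd (\<Sum>i<P. y^(P - Suc i) * x^i)" by (simp add: cong_0_iff)
  then have "p ^ n * p dvd (x - y) * (\<Sum>i<P. y^(P - Suc i) * x^i)"
    using assms(2) mult_dvd_mono by blast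
  then show ?thesis unfolding power_diff_sumr2 P_def by (simp add: mult.commute)
qed


definition Gh :: "int \<Rightarrow> nat \<Rightarrow> (nat \<Rightarrow> int) \<Rightarrow> nat \<Rightarrow> int" where
  "Gh p k a s = (\<Sum>i\<in>{s..k}. a i * p ^ (k - i))"

definition Dset :: "int \<Rightarrow> nat \<Rightarrow> nat \<Rightarrow> (nat \<Rightarrow> int) set" where
  "Dset p t k = {a \<in> carR k. \<forall>s\<le>min t k. Gh p k a s = 0}"

lemma Gh_top[simp]: "Gh p k a k = a k"
  by (simp add: Gh_def)

lemma Gh_step: "s < k \<Longrightarrow> Gh p k a s = a s * p ^ (k - s) + Gh p k a (Suc s)"
  unfolding Gh_def by (simp add: sum.atLeast_Suc_atMost)

lemma Gh_cong: "(\<And>i. i \<le> k \<Longrightarrow> f i = g i) \<Longrightarrow> Gh p k f s = Gh p k g s"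
  unfolding Gh_def by (rule sum.cong) auto

lemma Gh_const: "s \<le> k \<Longrightarrow> Gh p k (\<lambda>i. if i = k then c else 0) s = c"
proof (induction s rule: inc_induct)
  case base then show ?case by simp
next
  case (step n) then show ?case by (simp add: Gh_step)
qed

lemma Gh_add: "Gh p k (\<lambda>i. a i + b i) s = Gh p k a s + Gh p k b s"
  unfolding Gh_def by (simp add: sum.distrib distrib_right)

lemma Gh_diff: "Gh p k (\<lambda>i. a i - b i) s = Gh p k a s - Gh p k b s"
  unfolding Gh_def by (simp add: sum_subtractf left_diff_distrib)

lemma Gh_scal: "Gh p k (\<lambda>i. c * a i) s = c * Gh p k a s"
  unfolding Gh_def by (simp add: sum_distrib_left mult.assoc)

lemma Gh_zero[simp]: "Gh p k zeroR s = 0"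
  unfolding Gh_def zeroR_def by simp

lemma Gh_inj:
  assumes "p \<noteq> 0" "a \<in> carR k" "b \<in> carR k" "\<And>s. s \<le> k \<Longrightarrow> Gh p k a s = Gh p k b s"
  shows "a = b"
proof
  fix i
  show "a i = b i"
  proof (cases "k < i")
    case True then show ?thesis using assms(2,3) by (simp add: carR_def)
  next
    case False
    show ?thesis
    proof (cases "i = k")
      case True then show ?thesis using assms(4)[of k] by simp
    next
      case False
      with \<open>\<not> k < i\<close> have ik: "i < k" by simp
      have "a i * p ^ (k - i) = b i * p ^ (k - i)"
        using assms(4)[of i] assms(4)[of "Suc i"] ik by (simp add: Gh_step[OF ik])
      then show ?thesis using assms(1) by simp
    qed
  qed
qed

lemma Gh_res:
  assumes "s \<le> m" "m \<le> k" shows "Gh p m (resR p k m a) s = Gh p k a s"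
  using assms(1)
proof (induction s rule: inc_induct)
  case base then show ?case by (simp add: resR_def Gh_def)
next
  case (step n)
  have "(k - m) + (m - n) = k - n" using step assms by simp
  then have "p ^ (k - m) * p ^ (m - n) = p ^ (k - n)" by (metis power_add)
  then show ?case using step assms
    by (simp add: Gh_step resR_def mult.assoc mult.left_commute[of "p ^ (k-m)"])
qed

lemma Gh_split:
  assumes "s \<le> k" shows "Gh p (Suc k) a s = p * Gh p k a s + a (Suc k)"
  using assms
proof (induction s rule: inc_induct)
  case base then show ?case by (simp add: Gh_step mult.commute)
next
  case (step n)
  then have "Suc k - n = Suc (k - n)" by simp
  then show ?case using step by (simp add: Gh_step algebra_simps)
qed

lemma mulR_car: "mulR p k c a \<in> carR k"
  by (simp add: mulR_def carR_def)

lemma resR_car: "resR p k m a \<in> carR m"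
  by (simp add: resR_def carR_def)

lemma jndR_car: "k \<le> l \<Longrightarrow> jndR p l k a \<in> carR l"
  by (simp add: jndR_def carR_def)

lemma sum_if_ge: "(\<Sum>i\<le>(k::nat). if s \<le> i then f i else (0::int)) = (\<Sum>i\<in>{s..k}. f i)"
  by (rule sum.mono_neutral_cong_right) auto

lemma Gh_mul:
  assumes "s \<le> k"
  shows "Gh p k (mulR p k c a) s = Gh p k c s * Gh p k a s"
proof -
  define F where "F i j = c i * a j * p ^ (k - max i j) * p ^ (k - min i j)" for i j
  have "Gh p k (mulR p k c a) s = (\<Sum>m\<in>{s..k}. \<Sum>i\<le>k. \<Sum>j\<le>k. if min i j = m then F i j else 0)"
    unfolding Gh_def mulR_def F_def
    by (rule sum.cong) (auto simp: sum_distrib_right intro!: sum.cong)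
  also have "\<dots> = (\<Sum>i\<le>k. \<Sum>j\<le>k. \<Sum>m\<in>{s..k}. if min i j = m then F i j else 0)"
    by (rule trans[OF sum.swap], rule sum.cong[OF refl], rule sum.swap)
  also have "\<dots> = (\<Sum>i\<le>k. \<Sum>j\<le>k. (if s \<le> i then c i * p ^ (k - i) else 0) * (if s \<le> j then a j * p ^ (k - j) else 0))"
  proof (intro sum.cong refl)
    fix i j assume "i \<in> {..k}" "j \<in> {..k}"
    then have ij: "i \<le> k" "j \<le> k" by auto
    have "(\<Sum>m\<in>{s..k}. if min i j = m then F i j else 0) = (if min i j \<in> {s..k} then F i j else 0)"
      by (simp add: sum.delta)
    also have "\<dots> = (if s \<le> i then c i * p ^ (k - i) else 0) * (if s \<le> j then a j * p ^ (k - j) else 0)"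
      using ij by (cases "i \<le> j") (auto simp: F_def max_def min_def mult_ac)
    finally show "(\<Sum>m\<in>{s..k}. if min i j = m then F i j else 0) = \<dots>" .
  qed
  also have "\<dots> = (\<Sum>i\<le>k. if s \<le> i then c i * p ^ (k - i) else 0) * (\<Sum>j\<le>k. if s \<le> j then a j * p ^ (k - j) else 0)"
    by (simp add: sum_product)
  finally show ?thesis unfolding Gh_def by (simp only: sum_if_ge)
qed


lemma p_facts: assumes "prime (p::int)" shows "p > 1 \<and> p \<noteq> 0 \<and> nat p \<ge> 1"
proof -
  have "p > 1" using prime_gt_1_int[OF assms] .
  then show ?thesis by simp
qed

lemma jnd1_top: "jndR p (Suc k) k m (Suc k) = m k"
  by (simp add: jndR_def)

lemma jnd1_k: "jndR p (Suc k) k m k = (m k ^ nat p - m k) div p"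
  by (simp add: jndR_def)

lemma jnd1_lt: "i < k \<Longrightarrow> jndR p (Suc k) k m i
   = (Gh p k m i ^ nat p - Gh p k m (Suc i) ^ nat p) div p ^ (Suc k - i)"
  by (simp add: jndR_def Gh_def)

lemma Gh_jnd:
  assumes "prime p" "s \<le> k"
  shows "Gh p (Suc k) (jndR p (Suc k) k m) s = (Gh p k m s) ^ nat p"
  using assms(2)
proof (induction s rule: inc_induct)
  case base
  let ?x = "jndR p (Suc k) k m"
  have d: "p dvd m k ^ nat p - m k" using fermat_int[OF assms(1)] .
  have "Gh p (Suc k) ?x k = ?x k * p ^ (Suc k - k) + Gh p (Suc k) ?x (Suc k)"
    by (rule Gh_step) simp
  also have "\<dots> = ((m k ^ nat p - m k) div p) * p + m k"
    by (simp only: jnd1_k jnd1_top Gh_top Suc_diff_le order_refl diff_self_eq_0 power_one_right power_Suc0_right)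
  also have "\<dots> = m k ^ nat p" using d by (simp only: dvd_div_mult_self diff_add_cancel)
  finally show ?case by (simp only: Gh_top)
next
  case (step n)
  let ?x = "jndR p (Suc k) k m"
  have e: "Suc k - n = Suc (k - n)" using step by simp
  have "Gh p k m n - Gh p k m (Suc n) = m n * p ^ (k - n)" using Gh_step[OF step(2)] by simp
  then have "p ^ (k - n) dvd Gh p k m n - Gh p k m (Suc n)" by simp
  then have d: "p ^ (Suc k - n) dvd Gh p k m n ^ nat p - Gh p k m (Suc n) ^ nat p"
    unfolding e using step by (intro pow_p_cong[OF assms(1)]) auto
  have "Gh p (Suc k) ?x n = ?x n * p ^ (Suc k - n) + Gh p (Suc k) ?x (Suc n)"
    using step by (intro Gh_step) auto
  also have "\<dots> = (Gh p k m n ^ nat p - Gh p k m (Suc n) ^ nat p) div p ^ (Suc k - n) * p ^ (Suc k - n)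
       + Gh p k m (Suc n) ^ nat p"
    using step(2) step(3) by (simp only: jnd1_lt)
  also have "\<dots> = Gh p k m n ^ nat p"
    using d by (simp only: dvd_div_mult_self diff_add_cancel)
  finally show ?case .
qed

lemma res_id: "a \<in> carR k \<Longrightarrow> resR p k k a = a"
  by (rule ext) (auto simp: resR_def carR_def)

lemma jnd_id: assumes "p \<noteq> 0" "a \<in> carR l" shows "jndR p l l a = a"
proof
  fix i
  show "jndR p l l a i = a i"
  proof (cases "i < l")
    case True
    have "Gh p l a i - Gh p l a (Suc i) = a i * p ^ (l - i)" using Gh_step[OF True] by simp
    then show ?thesis using True assms(1) by (simp add: jndR_def Gh_def[symmetric])
  next
    case False then show ?thesis using assms(2) by (auto simp: jndR_def carR_def)
  qed
qed

lemma ind_id: "a \<in> carR (k - 1) \<Longrightarrow> indR k (k - 1) a = a"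
  by (rule ext) (auto simp: indR_def carR_def)


lemma zeroR_car[simp]: "zeroR \<in> carR k"
  by (simp add: carR_def zeroR_def)

lemma Dset_sub: "Dset p t k \<subseteq> carR k"
  by (auto simp: Dset_def)

lemma zero_Dset[simp]: "zeroR \<in> Dset p t k"
  by (simp add: Dset_def)

lemma Dset_small: assumes "p \<noteq> 0" "k \<le> t" shows "Dset p t k = {zeroR}"
proof -
  have "a = zeroR" if "a \<in> Dset p t k" for a
    using that assms by (intro Gh_inj) (auto simp: Dset_def)
  then show ?thesis by auto
qed

lemma Dset_ideal: "is_idealR p k (Dset p t k)"
proof -
  have car: "(\<lambda>i. a i + b i) \<in> carR k" "(\<lambda>i. a i - b i) \<in> carR k"
    if "a \<in> carR k" "b \<in> carR k" for a b using that by (auto simp: carR_def)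
  show ?thesis unfolding is_idealR_def
    using car Dset_sub
    by (auto simp: Dset_def Gh_add Gh_diff Gh_mul mulR_car)
qed

lemma Dset_ind: assumes "a \<in> Dset p t j" shows "indR (Suc j) j a \<in> Dset p t (Suc j)"
proof -
  have ac: "a \<in> carR j" using assms by (simp add: Dset_def)
  have eq: "indR (Suc j) j a = a" using ind_id[of a "Suc j"] ac by simp
  have aS: "a (Suc j) = 0" using ac by (simp add: carR_def)
  have "a \<in> carR (Suc j)" using ac by (auto simp: carR_def)
  moreover have "Gh p (Suc j) a s = 0" if "s \<le> min t (Suc j)" for s
  proof (cases "s \<le> j")
    case True then show ?thesis using Gh_split[OF True, of p a] assms that aS
      by (simp add: Dset_def)
  next
    case False then have "s = Suc j" using that by simp
    then show ?thesis using aS by simp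
  qed
  ultimately show ?thesis using eq by (simp add: Dset_def)
qed

lemma Dset_res: assumes "a \<in> Dset p t (Suc j)" shows "resR p (Suc j) j a \<in> Dset p t j"
  using assms resR_car by (auto simp: Dset_def Gh_res)

lemma Dset_jnd: assumes "prime p" "a \<in> Dset p t j" shows "jndR p (Suc j) j a \<in> Dset p t (Suc j)"
proof -
  have P: "nat p \<ge> 1" using p_facts[OF assms(1)] by simp
  have "Gh p (Suc j) (jndR p (Suc j) j a) s = 0" if "s \<le> min t (Suc j)" for s
  proof (cases "s \<le> j")
    case True then show ?thesis using Gh_jnd[OF assms(1) True, of a] assms(2) that P
      by (simp add: Dset_def)
  next
    case False then have sj: "s = Suc j" using that by simp
    have le: "j \<le> min t j" using that sj by simp
    from assms(2) have "\<forall>s\<le>min t j. Gh p j a s = 0" by (simp add: Dset_def)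
    then have "Gh p j a j = 0" using le by blast
    then show ?thesis using sj by (simp add: jnd1_top)
  qed
  then show ?thesis using jndR_car[of j "Suc j"] by (simp add: Dset_def)
qed

lemma Lop_Dset: assumes "t \<le> j" shows "Lop p (Suc j) (Dset p t j) = Dset p t (Suc j)"
  using assms resR_car by (auto simp: Lop_def Dset_def Gh_res min_def)

lemma Lseq_pow:
  fixes p :: int shows "(Lseq p ^^ k) (map (Dset p t) [0..<Suc t]) = map (Dset p t) [0..<Suc (t + k)]"
proof (induction k)
  case 0 then show ?case by simp
next
  case (Suc k)
  have "(Lseq p ^^ Suc k) (map (Dset p t) [0..<Suc t])
      = Lseq p (map (Dset p t) [0..<Suc (t + k)])" using Suc by simp
  also have "\<dots> = map (Dset p t) [0..<Suc (t + k)] @ [Lop p (Suc (t + k)) (Dset p t (t + k))]"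
    by (simp add: Lseq_def last_map del: upt_Suc)
  also have "\<dots> = map (Dset p t) [0..<Suc (t + Suc k)]"
    by (simp add: Lop_Dset)
  finally show ?case .
qed

lemma Lpow_eq: assumes "p \<noteq> 0" "k \<le> l" shows "Lpow p k l = map (Dset p (l - k)) [0..<Suc l]"
proof -
  have "replicate (Suc (l - k)) {zeroR} = map (Dset p (l - k)) [0..<Suc (l - k)]"
    by (rule nth_equalityI) (auto simp: Dset_small[OF assms(1)] nth_Cons' simp del: upt_Suc)
  then show ?thesis unfolding Lpow_def using Lseq_pow[where p=p and k=k and t="l - k"] assms(2) by simp
qed


lemma jnd_top: "jndR p l k x l = x k"
  by (simp add: jndR_def)

lemma res_top: "resR p l k a k = Gh p l a k"
  by (simp add: resR_def Gh_def)

lemma Dseq_prime: assumes "prime p"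
  shows "is_prime_seq p l (map (Dset p t) [0..<Suc l])"
proof -
  have p0: "p \<noteq> 0" using p_facts[OF assms] by simp
  let ?I = "map (Dset p t) [0..<Suc l]"
  have nth: "?I ! k = Dset p t k" if "k \<le> l" for k
    using that by (simp del: upt_Suc)
  have ideal: "is_ideal_seq p l ?I"
    unfolding is_ideal_seq_def
  proof (intro conjI allI impI)
    show "length ?I = Suc l" by simp
    show "is_idealR p k (?I ! k)" if "k \<le> l" for k using that nth Dset_ideal by simp
  next
    fix k assume k: "1 \<le> k \<and> k \<le> l"
    then obtain j where j: "k = Suc j" by (cases k) auto
    have n1: "?I ! (k - 1) = Dset p t j" "?I ! k = Dset p t (Suc j)" using k j nth by auto
    show "\<forall>a\<in>?I ! (k - 1). indR k (k - 1) a \<in> ?I ! k" using n1 j Dset_ind by simp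
    show "\<forall>a\<in>?I ! k. resR p k (k - 1) a \<in> ?I ! (k - 1)" using n1 j Dset_res by simp
    show "\<forall>a\<in>?I ! (k - 1). jndR p k (k - 1) a \<in> ?I ! k" using n1 j Dset_jnd[OF assms] by simp
  qed
  have z: "?I ! 0 = {zeroR}" using nth[of 0] Dset_small[OF p0, of 0 t] by simp
  have "(\<lambda>i. if i = 0 then 1 else 0) \<in> carR 0" by (simp add: carR_def)
  moreover have "(\<lambda>i::nat. if i = 0 then 1 else 0::int) \<noteq> zeroR"
  proof
    assume H: "(\<lambda>i::nat. if i = 0 then 1 else 0::int) = zeroR"
    have "(1::int) = zeroR 0" using fun_cong[OF H, of 0] by simp
    then show False by (simp add: zeroR_def)
  qed
  ultimately have nc: "?I ! 0 \<noteq> carR 0" using z by auto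
  have pr: "a \<in> ?I ! k \<or> b \<in> ?I ! l'"
    if lk: "l' \<le> k" "k \<le> l" and ab: "a \<in> carR k" "b \<in> carR l'"
      and H: "\<forall>i\<le>k. \<forall>j\<le>l'.
             mulR p (max i j) (jndR p (max i j) i (resR p k i a))
                              (jndR p (max i j) j (resR p l' j b)) \<in> ?I ! (max i j)"
    for l' k a b
  proof (rule ccontr)
    assume "\<not> (a \<in> ?I ! k \<or> b \<in> ?I ! l')"
    then have "a \<notin> Dset p t k" "b \<notin> Dset p t l'" using lk nth by auto
    then obtain s1 s2 where s1: "s1 \<le> min t k" "Gh p k a s1 \<noteq> 0"
      and s2: "s2 \<le> min t l'" "Gh p l' b s2 \<noteq> 0" using ab by (auto simp: Dset_def)
    define m where "m = max s1 s2"
    have mk: "m \<le> k" "m \<le> t" "m \<le> l" using s1 s2 lk by (auto simp: m_def)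
    let ?P = "mulR p m (jndR p m s1 (resR p k s1 a)) (jndR p m s2 (resR p l' s2 b))"
    have s1k: "s1 \<le> k" and s2l: "s2 \<le> l'" using s1 s2 by auto
    have "?P \<in> ?I ! m" unfolding m_def by (rule H[rule_format, OF s1k s2l])
    then have "?P \<in> Dset p t m" using nth[OF mk(3)] by simp
    then have e0: "Gh p m ?P m = 0" using mk by (auto simp: Dset_def)
    have e1: "Gh p m ?P m = Gh p m (jndR p m s1 (resR p k s1 a)) m * Gh p m (jndR p m s2 (resR p l' s2 b)) m"
      by (rule Gh_mul) simp
    have e2: "Gh p m (jndR p m s1 (resR p k s1 a)) m * Gh p m (jndR p m s2 (resR p l' s2 b)) m = Gh p k a s1 * Gh p l' b s2"
      by (simp only: Gh_top jnd_top res_top)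
    have "Gh p k a s1 * Gh p l' b s2 = 0" using e0 unfolding e1 e2 .
    then show False using s1 s2 by simp
  qed
  show ?thesis unfolding is_prime_seq_def
    apply (intro conjI ideal nc allI impI)
    apply (elim conjE)
    apply (rule pr)
        apply assumption+
    done
qed


definition Ee :: "int \<Rightarrow> nat \<Rightarrow> nat \<Rightarrow> int" where
  "Ee p t = (\<lambda>i. if i = t then 1 else if i = Suc t then - p else 0)"

lemma Ee_car: "Ee p t \<in> carR (Suc t)"
  by (simp add: Ee_def carR_def)

lemma Ee_top: "Ee p t (Suc t) = - p"
  by (simp add: Ee_def)

lemma Ee_ne: "Ee p t \<noteq> zeroR"
proof
  assume "Ee p t = zeroR"
  then have "Ee p t t = zeroR t" by simp
  then show False by (simp add: Ee_def zeroR_def)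
qed

lemma Ee_D: "Ee p t \<in> Dset p t (Suc t)"
proof -
  have "Gh p (Suc t) (Ee p t) s = 0" if "s \<le> t" for s
  proof -
    have "Gh p t (Ee p t) s = Gh p t (\<lambda>i. if i = t then 1 else 0) s"
      by (rule Gh_cong) (auto simp: Ee_def)
    also have "\<dots> = 1" using that by (rule Gh_const)
    finally show ?thesis using Gh_split[OF that, of p "Ee p t"] by (simp add: Ee_top)
  qed
  then show ?thesis using Ee_car by (auto simp: Dset_def)
qed


lemma prime_classify:
  assumes pp: "prime p" and PI: "is_prime_seq p l I" and I0: "I ! 0 = {zeroR}"
  shows "\<exists>t\<le>l. I = map (Dset p t) [0..<Suc l]"
proof -
  have p0: "p \<noteq> 0" using p_facts[OF pp] by simp
  have IS: "is_ideal_seq p l I" using PI unfolding is_prime_seq_def by (rule conjunct1)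
  have PC: "\<forall>l' k a b. l' \<le> k \<and> k \<le> l \<and> a \<in> carR k \<and> b \<in> carR l' \<and>
          (\<forall>i\<le>k. \<forall>j\<le>l'.
             mulR p (max i j) (jndR p (max i j) i (resR p k i a))
                              (jndR p (max i j) j (resR p l' j b)) \<in> I ! (max i j))
          \<longrightarrow> a \<in> I ! k \<or> b \<in> I ! l'"
    using PI unfolding is_prime_seq_def by (rule conjunct2[THEN conjunct2])
  have len: "length I = Suc l" using IS by (simp add: is_ideal_seq_def)
  have idl: "is_idealR p k (I ! k)" if "k \<le> l" for k using IS that by (simp add: is_ideal_seq_def)
  have car: "I ! k \<subseteq> carR k" if "k \<le> l" for k using idl[OF that] by (simp add: is_idealR_def)
  have zin: "zeroR \<in> I ! k" if "k \<le> l" for k using idl[OF that] by (simp add: is_idealR_def)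
  have addc: "(\<lambda>i. a i + b i) \<in> I ! k" "(\<lambda>i. a i - b i) \<in> I ! k"
    if "k \<le> l" "a \<in> I ! k" "b \<in> I ! k" for k a b
    using idl[OF that(1)] that(2,3) by (auto simp: is_idealR_def)
  have mulc: "mulR p k c a \<in> I ! k" if "k \<le> l" "c \<in> carR k" "a \<in> I ! k" for k c a
    using idl[OF that(1)] that(2,3) by (auto simp: is_idealR_def)
  have seqc: "(\<forall>a\<in>I ! j. indR (Suc j) j a \<in> I ! Suc j)
        \<and> (\<forall>a\<in>I ! Suc j. resR p (Suc j) j a \<in> I ! j)
        \<and> (\<forall>a\<in>I ! j. jndR p (Suc j) j a \<in> I ! Suc j)" if "Suc j \<le> l" for j
    using IS that unfolding is_ideal_seq_def
    by (metis diff_Suc_1 le_add1 plus_1_eq_Suc)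
  have mono1: "I ! j \<subseteq> I ! Suc j" if "Suc j \<le> l" for j
  proof
    fix a assume a: "a \<in> I ! j"
    then have "a \<in> carR (Suc j - 1)" using car[of j] that by auto
    then have "indR (Suc j) j a = a" using ind_id[of a "Suc j"] by simp
    then show "a \<in> I ! Suc j" using seqc[OF that] a by metis
  qed
  have mono: "j' \<le> l \<longrightarrow> I ! j \<subseteq> I ! j'" if "j \<le> j'" for j j'
    using that
  proof (induction j' rule: dec_induct)
    case base then show ?case by simp
  next
    case (step n) then show ?case using mono1[of n] by auto
  qed
  define Z where "Z = {j. j \<le> l \<and> I ! j = {zeroR}}"
  have fZ: "finite Z" unfolding Z_def by simp
  have Z0: "0 \<in> Z" using I0 by (simp add: Z_def)
  define t where "t = Max Z"
  have tZ: "t \<in> Z" using fZ Z0 unfolding t_def by (intro Max_in) auto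
  then have tl: "t \<le> l" and It: "I ! t = {zeroR}" by (auto simp: Z_def)
  have gt: "I ! j \<noteq> {zeroR}" if "t < j" "j \<le> l" for j
  proof
    assume "I ! j = {zeroR}"
    then have "j \<in> Z" using that by (simp add: Z_def)
    then have "j \<le> t" unfolding t_def using fZ by simp
    then show False using that by simp
  qed
  have low: "I ! j = {zeroR}" if "j \<le> t" for j
    using mono[OF that] tl It zin[of j] that by auto
  have U: "j \<le> l \<longrightarrow> I ! j \<subseteq> Dset p t j" if "t \<le> j" for j
    using that
  proof (induction j rule: dec_induct)
    case base then show ?case using It by simp
  next
    case (step n)
    show ?case
    proof
      assume nl: "Suc n \<le> l"
      show "I ! Suc n \<subseteq> Dset p t (Suc n)"
      proof
        fix a assume a: "a \<in> I ! Suc n"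
        then have "resR p (Suc n) n a \<in> Dset p t n" using seqc[OF nl] step nl by auto
        moreover have "a \<in> carR (Suc n)" using car[OF nl] a by auto
        ultimately have "a \<in> Lop p (Suc n) (Dset p t n)" by (simp add: Lop_def)
        then show "a \<in> Dset p t (Suc n)" using Lop_Dset[OF step(1)] by simp
      qed
    qed
  qed
  have B: "Ee p t \<in> I ! Suc t" if T: "Suc t \<le> l"
  proof -
    have "I ! Suc t \<noteq> {zeroR}" using gt T by simp
    then obtain b where b: "b \<in> I ! Suc t" "b \<noteq> zeroR" using zin[OF T] by blast
    have bD: "b \<in> Dset p t (Suc t)" using U[of "Suc t"] T b by auto
    define n where "n = b t"
    have "Gh p (Suc t) b t = 0" using bD by (auto simp: Dset_def)
    then have "b t * p + b (Suc t) = 0" using Gh_step[of t "Suc t" p b] by simp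
    moreover have "b t * p = p * b t" by (rule mult.commute)
    ultimately have bS: "b (Suc t) = - p * n" unfolding n_def by simp
    have nE_car: "(\<lambda>i. n * Ee p t i) \<in> carR (Suc t)" using Ee_car by (simp add: carR_def)
    have bE: "b = (\<lambda>i. n * Ee p t i)"
    proof (rule Gh_inj[OF p0])
      show "b \<in> carR (Suc t)" using bD by (simp add: Dset_def)
      show "(\<lambda>i. n * Ee p t i) \<in> carR (Suc t)" by (rule nE_car)
      fix s assume s: "s \<le> Suc t"
      show "Gh p (Suc t) b s = Gh p (Suc t) (\<lambda>i. n * Ee p t i) s"
      proof (cases "s \<le> t")
        case True
        then show ?thesis using bD Ee_D by (simp add: Gh_scal Dset_def)
      next
        case False
        then have "s = Suc t" using s by simp
        then show ?thesis using bS by (simp add: Ee_top)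
      qed
    qed
    have n0: "n \<noteq> 0" using b(2) bE by (auto simp: zeroR_def)
    define b0 where "b0 = (\<lambda>i::nat. if i = 0 then n else 0)"
    have b0c: "b0 \<in> carR 0" by (simp add: b0_def carR_def)
    have b0n: "b0 \<notin> I ! 0" using I0 n0 by (auto simp: b0_def zeroR_def fun_eq_iff)
    have prods: "\<forall>i\<le>Suc t. \<forall>j\<le>0.
             mulR p (max i j) (jndR p (max i j) i (resR p (Suc t) i (Ee p t)))
                              (jndR p (max i j) j (resR p 0 j b0)) \<in> I ! (max i j)"
    proof (intro allI impI)
      fix i j :: nat assume i: "i \<le> Suc t" and j: "j \<le> 0"
      then have j0: "j = 0" by simp
      let ?J = "jndR p i 0 (resR p 0 0 b0)"
      show "mulR p (max i j) (jndR p (max i j) i (resR p (Suc t) i (Ee p t)))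
                              (jndR p (max i j) j (resR p 0 j b0)) \<in> I ! (max i j)"
      proof (cases "i \<le> t")
        case True
        have r0: "resR p (Suc t) i (Ee p t) = zeroR"
        proof (rule Gh_inj[OF p0 resR_car zeroR_car])
          fix s assume "s \<le> i"
          then show "Gh p i (resR p (Suc t) i (Ee p t)) s = Gh p i zeroR s"
            using Gh_res[of s i "Suc t" p "Ee p t"] True Ee_D by (auto simp: Dset_def)
        qed
        have m0: "mulR p i zeroR ?J = zeroR"
          by (rule Gh_inj[OF p0 mulR_car zeroR_car]) (simp add: Gh_mul)
        show ?thesis using j0 r0 m0 jnd_id[OF p0 zeroR_car] zin[of i] i T by simp
      next
        case False
        then have iS: "i = Suc t" using i by simp
        have JS: "?J (Suc t) = n" using iS by (simp add: jnd_top res_top b0_def)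
        have "mulR p (Suc t) (Ee p t) ?J = (\<lambda>i. n * Ee p t i)"
        proof (rule Gh_inj[OF p0 mulR_car nE_car])
          fix s assume s: "s \<le> Suc t"
          show "Gh p (Suc t) (mulR p (Suc t) (Ee p t) ?J) s = Gh p (Suc t) (\<lambda>i. n * Ee p t i) s"
          proof (cases "s \<le> t")
            case True
            then show ?thesis using Ee_D s by (simp add: Gh_mul Gh_scal Dset_def)
          next
            case False
            then have "s = Suc t" using s by simp
            then show ?thesis using JS by (subst Gh_mul) (auto simp: Ee_top)
          qed
        qed
        then show ?thesis using iS j0 res_id[OF Ee_car] jnd_id[OF p0 Ee_car] b bE by simp
      qed
    qed
    have "Ee p t \<in> I ! Suc t \<or> b0 \<in> I ! 0"
      using PC[rule_format, of 0 "Suc t" "Ee p t" b0] T Ee_car b0c prods by blast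
    then show ?thesis using b0n by blast
  qed
  have Y: "j \<le> l \<longrightarrow> (\<exists>y\<in>I ! j. y j = p)" if "Suc t \<le> j" for j
    using that
  proof (induction j rule: dec_induct)
    case base
    show ?case
    proof
      assume T: "Suc t \<le> l"
      have y1: "(\<lambda>i. zeroR i - Ee p t i) \<in> I ! Suc t" using addc(2)[OF T zin[OF T] B[OF T]] .
      have y2: "(\<lambda>i. zeroR i - Ee p t i) (Suc t) = p" by (simp add: zeroR_def Ee_top)
      show "\<exists>y\<in>I ! Suc t. y (Suc t) = p" by (rule bexI[where x="\<lambda>i. zeroR i - Ee p t i"]) (use y1 y2 in simp_all)
    qed
  next
    case (step n)
    show ?case
    proof
      assume nl: "Suc n \<le> l"
      then obtain y where y: "y \<in> I ! n" "y n = p" using step by auto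
      then have "jndR p (Suc n) n y \<in> I ! Suc n" using seqc[OF nl] by auto
      moreover have "jndR p (Suc n) n y (Suc n) = p" using y by (simp add: jnd1_top)
      ultimately show "\<exists>y\<in>I ! Suc n. y (Suc n) = p" by blast
    qed
  qed
  have L: "j \<le> l \<longrightarrow> Dset p t j \<subseteq> I ! j" if "t \<le> j" for j
    using that
  proof (induction j rule: dec_induct)
    case base then show ?case using Dset_small[OF p0, of t t] zin by auto
  next
    case (step n)
    show ?case
    proof
      assume nl: "Suc n \<le> l"
      then have IH: "Dset p t n \<subseteq> I ! n" using step by simp
      obtain y where y: "y \<in> I ! Suc n" "y (Suc n) = p" using Y[of "Suc n"] step nl by auto
      have yD: "y \<in> Dset p t (Suc n)" using U[of "Suc n"] step nl y by auto
      have yc: "y \<in> carR (Suc n)" using yD by (simp add: Dset_def)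
      show "Dset p t (Suc n) \<subseteq> I ! Suc n"
      proof
        fix a assume aD: "a \<in> Dset p t (Suc n)"
        have ac: "a \<in> carR (Suc n)" using aD by (simp add: Dset_def)
        have "Gh p (Suc n) a t = 0" using aD step by (auto simp: Dset_def)
        then have aS: "a (Suc n) = p * c" if "c = - Gh p n a t" for c
          using Gh_split[of t n p a] step that by simp
        define c where "c = - Gh p n a t"
        define cc where "cc = (\<lambda>i. if i = Suc n then c else 0)"
        have ccc: "cc \<in> carR (Suc n)" by (simp add: cc_def carR_def)
        have cyc: "(\<lambda>i. c * y i) \<in> carR (Suc n)" using yc by (simp add: carR_def)
        have "mulR p (Suc n) cc y = (\<lambda>i. c * y i)"
          by (rule Gh_inj[OF p0 mulR_car cyc]) (simp add: Gh_mul Gh_scal cc_def Gh_const)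
        then have cyI: "(\<lambda>i. c * y i) \<in> I ! Suc n" using mulc[OF nl ccc y(1)] by simp
        define a' where "a' = (\<lambda>i. a i - c * y i)"
        have a'c: "a' \<in> carR n"
          unfolding carR_def
        proof (intro CollectI allI impI)
          fix i assume "n < i"
          then have "i = Suc n \<or> Suc n < i" by auto
          then show "a' i = 0"
            using ac yc aS[OF c_def] y(2) by (auto simp: a'_def carR_def)
        qed
        have "Gh p n a' s = 0" if s: "s \<le> min t n" for s
        proof -
          have sn: "s \<le> n" using s by simp
          have "Gh p (Suc n) a' s = Gh p (Suc n) a s - c * Gh p (Suc n) y s"
            unfolding a'_def by (simp add: Gh_diff Gh_scal)
          also have "\<dots> = 0" using aD yD s by (auto simp: Dset_def)
          finally have "p * Gh p n a' s + a' (Suc n) = 0" using Gh_split[OF sn, of p a'] by simp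
          moreover have "a' (Suc n) = 0" using a'c by (simp add: carR_def)
          ultimately show ?thesis using p0 by simp
        qed
        then have "a' \<in> Dset p t n" using a'c by (simp add: Dset_def)
        then have "a' \<in> I ! Suc n" using IH mono1[OF nl] by auto
        then have "(\<lambda>i. a' i + c * y i) \<in> I ! Suc n" using addc(1)[OF nl _ cyI] by simp
        moreover have "(\<lambda>i. a' i + c * y i) = a" by (simp add: a'_def)
        ultimately show "a \<in> I ! Suc n" by simp
      qed
    qed
  qed
  have "I = map (Dset p t) [0..<Suc l]"
  proof (rule nth_equalityI)
    show "length I = length (map (Dset p t) [0..<Suc l])" using len by simp
    fix j assume "j < length I"
    then have jl: "j \<le> l" using len by simp
    show "I ! j = map (Dset p t) [0..<Suc l] ! j"
    proof (cases "j \<le> t")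
      case True then show ?thesis using low Dset_small[OF p0] jl by (simp del: upt_Suc)
    next
      case False then show ?thesis using U[of j] L[of j] jl by (auto simp del: upt_Suc)
    qed
  qed
  then show ?thesis using tl by blast
qed


theorem proposition6:
  fixes p :: int and r l :: nat
  assumes "prime p" and "l \<le> r"
  shows "{I. is_prime_seq p l I \<and> I ! 0 = {zeroR}} = (\<lambda>k. Lpow p k l) ` {0..l}
       \<and> (\<forall>k<l. seq_psubset (Lpow p k l) (Lpow p (Suc k) l))"
proof
  have p0: "p \<noteq> 0" using p_facts[OF assms(1)] by simp
  show "{I. is_prime_seq p l I \<and> I ! 0 = {zeroR}} = (\<lambda>k. Lpow p k l) ` {0..l}"
  proof
    show "{I. is_prime_seq p l I \<and> I ! 0 = {zeroR}} \<subseteq> (\<lambda>k. Lpow p k l) ` {0..l}"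
    proof
      fix I assume "I \<in> {I. is_prime_seq p l I \<and> I ! 0 = {zeroR}}"
      then obtain t where t: "t \<le> l" "I = map (Dset p t) [0..<Suc l]"
        using prime_classify[OF assms(1)] by blast
      have "Lpow p (l - t) l = I" using Lpow_eq[OF p0, of "l - t" l] t by simp
      then show "I \<in> (\<lambda>k. Lpow p k l) ` {0..l}" by force
    qed
  next
    show "(\<lambda>k. Lpow p k l) ` {0..l} \<subseteq> {I. is_prime_seq p l I \<and> I ! 0 = {zeroR}}"
    proof
      fix I assume "I \<in> (\<lambda>k. Lpow p k l) ` {0..l}"
      then obtain k where k: "k \<le> l" "I = Lpow p k l" by auto
      then have I: "I = map (Dset p (l - k)) [0..<Suc l]" using Lpow_eq[OF p0] by simp
      have "I ! 0 = {zeroR}" using I Dset_small[OF p0, of 0 "l - k"] by (simp del: upt_Suc)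
      then show "I \<in> {I. is_prime_seq p l I \<and> I ! 0 = {zeroR}}"
        using I Dseq_prime[OF assms(1)] by simp
    qed
  qed
next
  have p0: "p \<noteq> 0" using p_facts[OF assms(1)] by simp
  show "\<forall>k<l. seq_psubset (Lpow p k l) (Lpow p (Suc k) l)"
  proof (intro allI impI)
    fix k assume kl: "k < l"
    define t where "t = l - k"
    have t1: "t \<ge> 1" "l - Suc k = t - 1" "t \<le> l" using kl by (auto simp: t_def)
    have A: "Lpow p k l = map (Dset p t) [0..<Suc l]" using Lpow_eq[OF p0] kl t_def by simp
    have Bq: "Lpow p (Suc k) l = map (Dset p (t - 1)) [0..<Suc l]"
      using Lpow_eq[OF p0, of "Suc k" l] kl t1 by simp
    have sub: "seq_subset (Lpow p k l) (Lpow p (Suc k) l)"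
      unfolding seq_subset_def A Bq
      by (auto simp: Dset_def simp del: upt_Suc)
    have tt: "Suc (t - 1) = t" using t1 by simp
    have "Ee p (t - 1) \<in> Dset p (t - 1) t" using Ee_D[of p "t - 1"] tt by simp
    moreover have "Dset p t t = {zeroR}" using Dset_small[OF p0] by simp
    ultimately have "Dset p t t \<noteq> Dset p (t - 1) t" using Ee_ne by auto
    moreover have "map (Dset p t) [0..<Suc l] ! t = Dset p t t"
      "map (Dset p (t - 1)) [0..<Suc l] ! t = Dset p (t - 1) t" using t1 by (simp_all del: upt_Suc)
    ultimately have "Lpow p k l \<noteq> Lpow p (Suc k) l"
      unfolding A Bq by metis
    then show "seq_psubset (Lpow p k l) (Lpow p (Suc k) l)"
      using sub by (simp add: seq_psubset_def)
  qed
qed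

end
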